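(* Fix $\alpha\in(0,1/2)$ and $q_1,q_3\in(0,1)$, and define $m^*(3/4,3/4)=16\alpha$, $m^*(3/4,1/4)=m^*(1/4,3/4)=\frac{8(1-2\alpha)}{3}$, $m^*(1/4,1/4)=\frac{16\alpha}{9}$, $m^*=\frac{16(4\alpha+3)}{9}$, $\overline{q}^*=\frac{8\alpha+3}{8\alpha+6}$, $\overline{\lambda}^*=1/m^*$, $$\overline{q}=\frac{1}{m^*}\Big[\big(m^*(\tfrac34,\tfrac34)+m^*(\tfrac34,\tfrac14)\big)q_3+\big(m^*(\tfrac14,\tfrac34)+m^*(\tfrac14,\tfrac14)\big)q_1\Big],$$ $$\overline{\lambda}=\frac{1}{m^*}\Big(m^*(\tfrac34,\tfrac34)\tfrac{1-q_3}{4}+m^*(\tfrac34,\tfrac14)\tfrac{3(1-q_3)}{4}+m^*(\tfrac14,\tfrac34)\tfrac{1-q_1}{4}+m^*(\tfrac14,\tfrac14)\tfrac{3(1-q_1)}{4}\Big).$$ Suppose one of the following holds: (1) $\alpha=1/4$ and $6q_3+2q_1>5$; (2) $\alpha<1/4$ and $(q_1,q_3)\in\{q_1\ge 1/4,\ 6q_3+2q_1>5\}\cup\{q_1<1/4,\ (12\alpha+3)q_3+(3-4\alpha)q_1>8\alpha+3\}$; (3) $\alpha>1/4$ and $(q_1,q_3)\in\{q_1\le 1/4,\ 6q_3+2q_1>5\}\cup\{q_1>1/4,\ (12\alpha+3)q_3+(3-4\alpha)q_1>8\alpha+3\}$. Then $\overline{q}>\overline{q}^*$ and $\overline{\lamb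da}<\overline{\lambda}^*$.
   Context: Interpretation: $m^*(x,e)$ is the steady-state mass of type-$(x,e)$ users under the status quo (quality $q^*(x)=x$, churn probability $(1-q(x))(1-e)$ per period, inflow masses $\alpha,1/2-\alpha,1/2-\alpha,\alpha$ for types $(3/4,3/4),(3/4,1/4),(1/4,3/4),(1/4,1/4)$); $\overline{q},\overline{\lambda}$ are the one-period experimental ARQ and churn rate of the treatment with qualities $q_1$ (segment $x=1/4$) and $q_3$ (segment $x=3/4$); $\overline{q}^*,\overline{\lambda}^*$ are the status quo values. *)

theory Defs
  imports Complex_Main
begin

definition mstar_hh :: "real \<Rightarrow> real" where "mstar_hh \<alpha> = 16 * \<alpha>"
definition mstar_hl :: "real \<Rightarrow> real" where "mstar_hl \<alpha> = 8 * (1 - 2*\<alpha>) / 3"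
definition mstar_lh :: "real \<Rightarrow> real" where "mstar_lh \<alpha> = 8 * (1 - 2*\<alpha>) / 3"
definition mstar_ll :: "real \<Rightarrow> real" where "mstar_ll \<alpha> = 16 * \<alpha> / 9"
definition mstar_tot :: "real \<Rightarrow> real" where "mstar_tot \<alpha> = 16 * (4*\<alpha> + 3) / 9"

definition qbar_star :: "real \<Rightarrow> real" where "qbar_star \<alpha> = (8*\<alpha> + 3) / (8*\<alpha> + 6)"
definition lambda_star :: "real \<Rightarrow> real" where "lambda_star \<alpha> = 1 / mstar_tot \<alpha>"

definition qbar :: "real \<Rightarrow> real \<Rightarrow> real \<Rightarrow> real" where
  "qbar \<alpha> q1 q3 = (1 / mstar_tot \<alpha>) *
     ((mstar_hh \<alpha> + mstar_hl \<alpha>) * q3 + (mstar_lh \<alpha> + mstar_ll \<alpha>) * q1)"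

definition lambda_bar :: "real \<Rightarrow> real \<Rightarrow> real \<Rightarrow> real" where
  "lambda_bar \<alpha> q1 q3 = (1 / mstar_tot \<alpha>) *
     (mstar_hh \<alpha> * ((1 - q3) / 4) + mstar_hl \<alpha> * (3 * (1 - q3) / 4)
      + mstar_lh \<alpha> * ((1 - q1) / 4) + mstar_ll \<alpha> * (3 * (1 - q1) / 4))"

end

theory Submission
  imports Defs
begin

lemma qbar_eq:
  assumes "0 < (\<alpha>::real)"
  shows "qbar \<alpha> q1 q3 - qbar_star \<alpha> = ((12*\<alpha> + 3)*q3 + (3 - 4*\<alpha>)*q1 - (8*\<alpha> + 3)) / (2*(4*\<alpha>+3))"
proof -
  have a: "4*\<alpha>+3 \<noteq> 0" "8*\<alpha>+6 \<noteq> 0" "16*(4*\<alpha>+3) \<noteq> 0" using assms by auto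
  show ?thesis unfolding qbar_def qbar_star_def mstar_tot_def mstar_hh_def mstar_hl_def mstar_lh_def mstar_ll_def
    using a by (simp add: divide_simps) (simp add: algebra_simps)
qed

lemma lam_eq:
  assumes "0 < (\<alpha>::real)"
  shows "lambda_bar \<alpha> q1 q3 - lambda_star \<alpha> = (5 - 6*q3 - 2*q1) / (3 * mstar_tot \<alpha>)"
proof -
  have a: "4*\<alpha>+3 \<noteq> 0" "16*(4*\<alpha>+3) \<noteq> 0" using assms by auto
  show ?thesis unfolding lambda_bar_def lambda_star_def mstar_tot_def mstar_hh_def mstar_hl_def mstar_lh_def mstar_ll_def
    using a by (simp add: divide_simps) (simp add: algebra_simps)
qed

theorem corollary1:
  fixes \<alpha> q1 q3 :: real
  assumes "0 < \<alpha>" "\<alpha> < 1/2"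
    and "0 < q1" "q1 < 1" "0 < q3" "q3 < 1"
    and "(\<alpha> = 1/4 \<and> 6*q3 + 2*q1 > 5)
       \<or> (\<alpha> < 1/4 \<and> ((q1 \<ge> 1/4 \<and> 6*q3 + 2*q1 > 5)
                      \<or> (q1 < 1/4 \<and> (12*\<alpha> + 3)*q3 + (3 - 4*\<alpha>)*q1 > 8*\<alpha> + 3)))
       \<or> (\<alpha> > 1/4 \<and> ((q1 \<le> 1/4 \<and> 6*q3 + 2*q1 > 5)
                      \<or> (q1 > 1/4 \<and> (12*\<alpha> + 3)*q3 + (3 - 4*\<alpha>)*q1 > 8*\<alpha> + 3)))"
  shows "qbar \<alpha> q1 q3 > qbar_star \<alpha> \<and> lambda_bar \<alpha> q1 q3 < lambda_star \<alpha>"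
proof -
  have key: "(12*\<alpha> + 3)*q3 + (3 - 4*\<alpha>)*q1 > 8*\<alpha> + 3 \<and> 6*q3 + 2*q1 > 5"
    using assms(7)
  proof -
  have idd: "(12*\<alpha> + 3)*q3 + (3 - 4*\<alpha>)*q1 - (8*\<alpha> + 3) = (6*q3 + 2*q1 - 5) + 4*((\<alpha> - 1/4)*(3*q3 - q1 - 2))"
    by (simp add: algebra_simps)
  have id0: "(12*\<alpha> + 3)*q3 + (3 - 4*\<alpha>)*q1 - (8*\<alpha> + 3) = 4*((1/4 - \<alpha>)*(3*q3+3*q1-3)) + 4*(\<alpha>*(6*q3 + 2*q1 - 5))"
    by (simp add: algebra_simps)
  have id2: "(\<alpha> - 1/4)*(3*q3 - q1 - 2) = \<alpha>*(3*q3 - q1 - 2) - (3*q3 - q1 - 2)/4"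
    by (simp add: field_simps)
  show ?thesis using assms(7)
  proof (elim disjE conjE)
    assume h: "\<alpha> = 1/4" "6*q3 + 2*q1 > 5"
    from h(1) have "\<alpha> = 1/4" .
    then show ?thesis using h(2) unfolding h(1) by simp
  next
    assume h: "\<alpha> < 1/4" "q1 \<ge> 1/4" "6*q3 + 2*q1 > 5"
    have "q3 + q1 > 1" using h by linarith
    then have "(1/4 - \<alpha>)*(3*q3+3*q1-3) + \<alpha>*(6*q3 + 2*q1 - 5) > 0"
      using h assms(1) by (intro add_pos_pos mult_pos_pos) auto
    thus ?thesis using h using idd id0 id2 by linarith
  next
    assume h: "\<alpha> < 1/4" "q1 < 1/4" "(12*\<alpha> + 3)*q3 + (3 - 4*\<alpha>)*q1 > 8*\<alpha> + 3"
    show ?thesis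
    proof (cases "3*q3 - q1 - 2 \<ge> 0")
      case True
      have "(\<alpha> - 1/4)*(3*q3 - q1 - 2) \<le> 0" using True h by (intro mult_nonpos_nonneg) auto
      thus ?thesis using h idd by linarith
    next
      case False
      have "\<alpha>*(3*q3 - q1 - 2) \<le> 0" using False assms(1) by (simp add: mult_nonneg_nonpos)
      have id3: "(12*\<alpha> + 3)*q3 + (3 - 4*\<alpha>)*q1 - (8*\<alpha> + 3) = 3*(q3+q1-1) + 4*(\<alpha>*(3*q3 - q1 - 2))"
        by (simp add: algebra_simps)
      have "q3 + q1 > 1" using h id3 \<open>\<alpha>*(3*q3 - q1 - 2) \<le> 0\<close> by (smt (verit))
      thus ?thesis using False h by linarith
    qed
  next
    assume h: "\<alpha> > 1/4" "q1 \<le> 1/4" "6*q3 + 2*q1 > 5"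
    have "(\<alpha> - 1/4)*(3*q3 - q1 - 2) \<ge> 0"
    proof -
      have "3*q3 - q1 - 2 \<ge> 0" using h by linarith
      thus ?thesis using h by simp
    qed
    thus ?thesis using h idd by linarith
  next
    assume h: "\<alpha> > 1/4" "q1 > 1/4" "(12*\<alpha> + 3)*q3 + (3 - 4*\<alpha>)*q1 > 8*\<alpha> + 3"
    show ?thesis
    proof (cases "3*q3 - q1 - 2 \<le> 0")
      case True
      have "(\<alpha> - 1/4)*(3*q3 - q1 - 2) \<le> 0" using True h by (simp add: mult_nonneg_nonpos)
      thus ?thesis using h idd by linarith
    next
      case False
      thus ?thesis using h assms by linarith
    qed
  qed
  qed
  have p: "2*(4*\<alpha>+3) > 0" "3 * mstar_tot \<alpha> > 0" using assms(1) by (auto simp: mstar_tot_def)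
  have "qbar \<alpha> q1 q3 - qbar_star \<alpha> > 0"
    using qbar_eq[OF assms(1)] key p by simp
  moreover have "lambda_bar \<alpha> q1 q3 - lambda_star \<alpha> < 0"
    using lam_eq[OF assms(1)] key p by (simp add: divide_neg_pos)
  ultimately show ?thesis by simp
qed

end
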